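(* For every constant $\alpha>1$, any stable approximation scheme (SAS) for the dynamic broadcast range-assignment problem in $\mathbb{R}^1$ with distance-power gradient $\alpha$ must have stability parameter $k(\varepsilon)=\Omega\big((1/\varepsilon)^{1/(\alpha-1)}\big)$.
   Context: Broadcast range-assignment problem: $P$ is a finite set of points in $\mathbb{R}^1$ containing a designated source $s$. A range assignment $\rho$ gives each $p\in P$ a range $\rho(p)\ge 0$; it induces the directed communication graph on $P$ with an edge $(p,q)$ iff $|pq|\le\rho(p)$. The assignment is feasible if this graph contains an arborescence rooted at $s$ spanning $P$. Its cost is $\sum_{p\in P}\rho(p)^\alpha$, $\alpha>1$; $\mathrm{OPT}(P)$ is the minimum cost of a feasible assignment. In the dynamic version, points other than $s$ are inserted into and deleted from $P$. An update algorithm, given the current assignment and the update, outputs a feasible assignment for the updated set. The range of a point not in the current set is $0$. An update algorithm is $k$-stable if each insertion or deletion modifies at most $k$ ranges. A stable approximation scheme (SAS) is an update algorithm that, for any given fixed $\varepsilon>0$, is $k(\varepsilon)$-stable and after every update has cost at most $(1+\varepsilon)\mathrm{OPT}(P)$, where $k(\varepsilon)$ depends only on $\varepsilon$ and not on $|P|$. *)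

theory Defs
  imports Complex_Main "HOL-Library.Landau_Symbols"
begin

definition comm_edge :: "real set \<Rightarrow> (real \<Rightarrow> real) \<Rightarrow> real \<Rightarrow> real \<Rightarrow> bool" where
  "comm_edge P \<rho> p q \<longleftrightarrow> p \<in> P \<and> q \<in> P \<and> \<bar>p - q\<bar> \<le> \<rho> p"

definition has_arborescence :: "real \<Rightarrow> real set \<Rightarrow> (real \<Rightarrow> real) \<Rightarrow> bool" where
  "has_arborescence s P \<rho> \<longleftrightarrow>
     (\<exists>par :: real \<Rightarrow> real.
        (\<forall>q \<in> P - {s}. par q \<in> P \<and> comm_edge P \<rho> (par q) q) \<and>
        (\<forall>q \<in> P. \<exists>n. (par ^^ n) q = s))"

definition range_assignment :: "real set \<Rightarrow> (real \<Rightarrow> real) \<Rightarrow> bool" where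
  "range_assignment P \<rho> \<longleftrightarrow> (\<forall>p. \<rho> p \<ge> 0) \<and> (\<forall>p. p \<notin> P \<longrightarrow> \<rho> p = 0)"

definition feasible :: "real \<Rightarrow> real set \<Rightarrow> (real \<Rightarrow> real) \<Rightarrow> bool" where
  "feasible s P \<rho> \<longleftrightarrow> range_assignment P \<rho> \<and> has_arborescence s P \<rho>"

definition cost :: "real \<Rightarrow> real set \<Rightarrow> (real \<Rightarrow> real) \<Rightarrow> real" where
  "cost \<alpha> P \<rho> = (\<Sum>p\<in>P. \<rho> p powr \<alpha>)"

definition OPT :: "real \<Rightarrow> real \<Rightarrow> real set \<Rightarrow> real" where
  "OPT \<alpha> s P = Inf {cost \<alpha> P \<rho> | \<rho>. feasible s P \<rho>}"

datatype upd = Ins real | Del real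

definition valid_upd :: "real \<Rightarrow> real set \<Rightarrow> upd \<Rightarrow> bool" where
  "valid_upd s P u = (case u of Ins x \<Rightarrow> x \<noteq> s \<and> x \<notin> P | Del x \<Rightarrow> x \<noteq> s \<and> x \<in> P)"

fun apply_upd :: "upd \<Rightarrow> real set \<Rightarrow> real set" where
  "apply_upd (Ins x) P = insert x P"
| "apply_upd (Del x) P = P - {x}"

text \<open>An update algorithm maps (current point set, current assignment, update)
  to the new assignment. States reachable from the initial state P = {s}, rho = 0
  by sequences of valid updates.\<close>
inductive_set reachable ::
  "(real set \<Rightarrow> (real \<Rightarrow> real) \<Rightarrow> upd \<Rightarrow> (real \<Rightarrow> real)) \<Rightarrow> real \<Rightarrow> (real set \<times> (real \<Rightarrow> real)) set"
  for alg s where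
  init: "({s}, (\<lambda>_. 0)) \<in> reachable alg s"
| step: "(P, \<rho>) \<in> reachable alg s \<Longrightarrow> valid_upd s P u \<Longrightarrow>
         (apply_upd u P, alg P \<rho> u) \<in> reachable alg s"

definition modified :: "(real \<Rightarrow> real) \<Rightarrow> (real \<Rightarrow> real) \<Rightarrow> real set" where
  "modified \<rho> \<rho>' = {p. \<rho> p \<noteq> \<rho>' p}"

text \<open>alg eps is the update algorithm used for accuracy parameter eps;
  it is k(eps)-stable and (1+eps)-approximate after every update.\<close>
definition SAS :: "real \<Rightarrow> real \<Rightarrow>
    (real \<Rightarrow> real set \<Rightarrow> (real \<Rightarrow> real) \<Rightarrow> upd \<Rightarrow> (real \<Rightarrow> real)) \<Rightarrow> (real \<Rightarrow> nat) \<Rightarrow> bool" where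
  "SAS \<alpha> s alg k \<longleftrightarrow>
     (\<forall>\<epsilon>>0. \<forall>P \<rho> u. (P, \<rho>) \<in> reachable (alg \<epsilon>) s \<longrightarrow> valid_upd s P u \<longrightarrow>
        (let P' = apply_upd u P; \<rho>' = alg \<epsilon> P \<rho> u in
           feasible s P' \<rho>' \<and>
           finite (modified \<rho> \<rho>') \<and> card (modified \<rho> \<rho>') \<le> k \<epsilon> \<and>
           cost \<alpha> P' \<rho>' \<le> (1 + \<epsilon>) * OPT \<alpha> s P'))"

end

theory Submission
  imports Defs
begin

lemma cost_nonneg: "0 \<le> cost \<alpha> P \<rho>"
  unfolding cost_def by (simp add: sum_nonneg)

lemma OPT_le: assumes "feasible s P \<rho>" shows "OPT \<alpha> s P \<le> cost \<alpha> P \<rho>"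
  unfolding OPT_def
proof (rule cInf_lower)
  show "cost \<alpha> P \<rho> \<in> {cost \<alpha> P \<rho> |\<rho>. feasible s P \<rho>}" using assms by blast
  show "bdd_below {cost \<alpha> P \<rho> |\<rho>. feasible s P \<rho>}"
    by (rule bdd_belowI[of _ 0]) (auto simp: cost_nonneg)
qed

lemma funpow_minus_one: "((\<lambda>q::real. q - 1) ^^ n) q = q - real n"
  by (induction n) auto

lemma reach_grid:
  fixes A :: "real set \<Rightarrow> (real \<Rightarrow> real) \<Rightarrow> upd \<Rightarrow> (real \<Rightarrow> real)"
  shows "\<exists>\<rho>. ((\<lambda>i. s + real i) ` {0..j}, \<rho>) \<in> reachable A s"
proof (induction j)
  case 0
  then show ?case using reachable.init by auto
next
  case (Suc j)
  then obtain \<rho> where r: "((\<lambda>i. s + real i) ` {0..j}, \<rho>) \<in> reachable A s" by blast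
  have v: "valid_upd s ((\<lambda>i. s + real i) ` {0..j}) (Ins (s + real (Suc j)))"
    unfolding valid_upd_def by auto
  have e: "apply_upd (Ins (s + real (Suc j))) ((\<lambda>i. s + real i) ` {0..j}) = (\<lambda>i. s + real i) ` {0..Suc j}"
    by (auto simp: atLeast0_atMost_Suc)
  show ?case using reachable.step[OF r v] unfolding e by blast
qed

lemma path_lemma:
  fixes par :: "real \<Rightarrow> real"
  assumes par: "\<forall>q\<in>P - {s}. par q \<in> P \<and> \<bar>par q - q\<bar> \<le> \<rho> (par q)"
    and grid: "\<forall>x\<in>P. \<forall>y\<in>P. x \<noteq> y \<longrightarrow> 1 \<le> \<bar>x - y\<bar>"
  shows "q \<in> P \<Longrightarrow> (par ^^ n) q = s \<Longrightarrow> (\<forall>m<n. (par ^^ m) q \<noteq> s) \<Longrightarrow>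
     (\<forall>p \<in> (\<lambda>m. (par ^^ Suc m) q) ` {..<n}. p \<in> P \<and> 1 \<le> \<rho> p) \<and>
     \<bar>q - s\<bar> \<le> (\<Sum>p \<in> (\<lambda>m. (par ^^ Suc m) q) ` {..<n}. \<rho> p)"
proof (induction n arbitrary: q)
  case 0
  then show ?case by simp
next
  case (Suc n)
  define q' where "q' = par q"
  have qs: "q \<noteq> s" using Suc.prems(3) by force
  have q'P: "q' \<in> P" and edge: "\<bar>q' - q\<bar> \<le> \<rho> q'" using par Suc.prems(1) qs q'_def by auto
  have it: "\<And>m. (par ^^ Suc m) q = (par ^^ m) q'"
    unfolding q'_def by (simp add: funpow_Suc_right del: funpow.simps)
  have h2: "(par ^^ n) q' = s" using Suc.prems(2) it by metis
  have h3: "\<forall>m<n. (par ^^ m) q' \<noteq> s" using Suc.prems(3) it by (metis Suc_mono)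
  note IH = Suc.IH[OF q'P h2 h3]
  have qq: "q' \<noteq> q"
  proof
    assume "q' = q"
    then have "(par ^^ n) q = s" using h2 by simp
    then show False using Suc.prems(3) by auto
  qed
  have r1: "1 \<le> \<rho> q'" using grid q'P Suc.prems(1) qq edge by fastforce
  have img: "(\<lambda>m. (par ^^ Suc m) q) ` {..<Suc n} = insert q' ((\<lambda>m. (par ^^ Suc m) q') ` {..<n})"
    unfolding lessThan_Suc_eq_insert_0 image_insert image_image
    by (simp add: it q'_def del: funpow.simps)
  have notin: "q' \<notin> (\<lambda>m. (par ^^ Suc m) q') ` {..<n}"
  proof
    assume "q' \<in> (\<lambda>m. (par ^^ Suc m) q') ` {..<n}"
    then obtain m where m: "m < n" "q' = (par ^^ Suc m) q'" by auto
    have "(par ^^ (n - Suc m)) q' = (par ^^ (n - Suc m)) ((par ^^ Suc m) q')" using m by metis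
    also have "\<dots> = (par ^^ (n - Suc m + Suc m)) q'" by (simp only: funpow_add o_apply)
    also have "n - Suc m + Suc m = n" using m by simp
    finally have "(par ^^ (n - Suc m)) q' = s" using h2 by simp
    then show False using h3 m by auto
  qed
  have "\<bar>q - s\<bar> \<le> \<bar>q' - q\<bar> + \<bar>q' - s\<bar>" by simp
  also have "\<dots> \<le> \<rho> q' + (\<Sum>p \<in> (\<lambda>m. (par ^^ Suc m) q') ` {..<n}. \<rho> p)" using edge IH by linarith
  also have "\<dots> = (\<Sum>p \<in> (\<lambda>m. (par ^^ Suc m) q) ` {..<Suc n}. \<rho> p)"
    unfolding img using notin by simp
  finally show ?case using img IH r1 q'P by auto
qed

lemma nat_real_sep: "(i::nat) \<noteq> j \<Longrightarrow> 1 \<le> \<bar>real i - real j\<bar>"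
  by (cases "i < j") auto

lemma powr_lower:
  fixes x \<alpha> :: real
  assumes "\<alpha> > 1" "x \<ge> 1"
  shows "x + (2 powr (\<alpha> - 1) - 1) * (x - 2) \<le> x powr \<alpha>"
proof -
  have b0: "1 \<le> 2 powr (\<alpha> - 1)" using assms by (intro ge_one_powr_ge_zero) auto
  show ?thesis
  proof (cases "x \<le> 2")
    case True
    have "x powr 1 \<le> x powr \<alpha>" using assms by (intro powr_mono) auto
    then have "x \<le> x powr \<alpha>" by simp
    moreover have "(2 powr (\<alpha> - 1) - 1) * (x - 2) \<le> 0" using True b0 by (intro mult_nonneg_nonpos) auto
    ultimately show ?thesis by linarith
  next
    case False
    have "x powr \<alpha> = x * x powr (\<alpha> - 1)" using assms by (simp add: powr_mult_base)
    moreover have "2 powr (\<alpha> - 1) \<le> x powr (\<alpha> - 1)" using assms False by (intro powr_mono2) auto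
    ultimately have "x * 2 powr (\<alpha> - 1) \<le> x powr \<alpha>" using assms by (simp add: mult_left_mono)
    moreover have "x + (2 powr (\<alpha> - 1) - 1) * (x - 2) \<le> x * 2 powr (\<alpha> - 1)"
      using b0 False by (simp add: algebra_simps)
    ultimately show ?thesis by linarith
  qed
qed

lemma core:
  fixes \<alpha> s \<epsilon> :: real and d :: nat
    and alg :: "real \<Rightarrow> real set \<Rightarrow> (real \<Rightarrow> real) \<Rightarrow> upd \<Rightarrow> (real \<Rightarrow> real)"
    and k :: "real \<Rightarrow> nat"
  assumes a1: "\<alpha> > 1" and sas: "SAS \<alpha> s alg k" and ep: "\<epsilon> > 0" and d1: "d \<ge> 1"
  shows "real d * (2 powr (\<alpha> - 1) - 1 - \<epsilon>) / (2 * (2 powr (\<alpha> - 1) - 1)) - 1 - \<epsilon> * real d powr \<alpha>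
           \<le> real (k \<epsilon>)"
proof -
  define \<beta> where "\<beta> = 2 powr (\<alpha> - 1) - 1"
  have \<beta>0: "\<beta> > 0" unfolding \<beta>_def using a1 by (simp add: powr_gt_zero) 
  define Pd where "Pd = (\<lambda>i. s + real i) ` {0..d}"
  define Pm where "Pm = (\<lambda>i. s + real i) ` {0..d-1}"
  have finPd: "finite Pd" unfolding Pd_def by simp
  have sPd: "s \<in> Pd" unfolding Pd_def by force
  have PmPd: "Pm \<subseteq> Pd" unfolding Pm_def Pd_def by auto
  obtain \<rho>0 where r0: "(Pm, \<rho>0) \<in> reachable (alg \<epsilon>) s"
    using reach_grid unfolding Pm_def by blast
  have v0: "valid_upd s Pm (Ins (s + real d))" unfolding valid_upd_def Pm_def using d1 by auto
  have eP: "apply_upd (Ins (s + real d)) Pm = Pd"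
    unfolding Pm_def Pd_def using d1 
    by (auto simp: image_iff)
  define \<rho> where "\<rho> = alg \<epsilon> Pm \<rho>0 (Ins (s + real d))"
  have G: "\<And>P \<rho> u. (P, \<rho>) \<in> reachable (alg \<epsilon>) s \<Longrightarrow> valid_upd s P u \<Longrightarrow>
     feasible s (apply_upd u P) (alg \<epsilon> P \<rho> u) \<and> finite (modified \<rho> (alg \<epsilon> P \<rho> u)) \<and>
     card (modified \<rho> (alg \<epsilon> P \<rho> u)) \<le> k \<epsilon> \<and>
     cost \<alpha> (apply_upd u P) (alg \<epsilon> P \<rho> u) \<le> (1 + \<epsilon>) * OPT \<alpha> s (apply_upd u P)"
    using sas ep unfolding SAS_def Let_def by blast
  have S1: "feasible s Pd \<rho> \<and> cost \<alpha> Pd \<rho> \<le> (1 + \<epsilon>) * OPT \<alpha> s Pd"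
    using G[OF r0 v0] unfolding eP \<rho>_def[symmetric] by blast
  have rd: "(Pd, \<rho>) \<in> reachable (alg \<epsilon>) s"
    using reachable.step[OF r0 v0] unfolding eP \<rho>_def .
  define P' where "P' = insert (s - real d) Pd"
  have v1: "valid_upd s Pd (Ins (s - real d))" unfolding valid_upd_def Pd_def using d1 by auto
  define \<rho>' where "\<rho>' = alg \<epsilon> Pd \<rho> (Ins (s - real d))"
  have S2: "feasible s P' \<rho>' \<and> finite (modified \<rho> \<rho>') \<and> card (modified \<rho> \<rho>') \<le> k \<epsilon> \<and>
       cost \<alpha> P' \<rho>' \<le> (1 + \<epsilon>) * OPT \<alpha> s P'"
    using G[OF rd v1] unfolding \<rho>'_def P'_def by simp
  define C where "C = modified \<rho> \<rho>'"
  define \<rho>c where "\<rho>c = (\<lambda>p. if p \<in> Pm then 1 else (0::real))"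
  have fc: "feasible s Pd \<rho>c"
  proof -
    have h1: "q - 1 \<in> Pm" if q: "q \<in> Pd - {s}" for q
    proof -
      obtain i where i: "i \<le> d" "q = s + real i" "i \<noteq> 0" using q unfolding Pd_def by auto
      then have "q - 1 = s + real (i - 1)" by (simp add: of_nat_diff)
      moreover have "i - 1 \<in> {0..d-1}" using i by auto
      ultimately show ?thesis unfolding Pm_def by blast
    qed
    have h2: "\<exists>n. ((\<lambda>q. q - 1) ^^ n) q = s" if q: "q \<in> Pd" for q
    proof -
      obtain i where i: "q = s + real i" using q unfolding Pd_def by auto
      show ?thesis by (rule exI[of _ i]) (simp add: funpow_minus_one i)
    qed
    show ?thesis unfolding feasible_def range_assignment_def has_arborescence_def comm_edge_def
      using h1 h2 PmPd by (intro conjI exI[of _ "\<lambda>q. q - 1"]) (auto simp: \<rho>c_def)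
  qed
  have cardPm: "card Pm = d" unfolding Pm_def using d1 by (subst card_image) (auto simp: inj_on_def)
  have cc: "cost \<alpha> Pd \<rho>c = real d"
  proof -
    have "cost \<alpha> Pd \<rho>c = (\<Sum>p\<in>Pd. if p \<in> Pm then 1 else 0)"
      unfolding cost_def \<rho>c_def by (intro sum.cong) auto
    also have "\<dots> = (\<Sum>p\<in>Pd \<inter> Pm. 1)" using finPd by (simp only: sum.inter_restrict)
    also have "Pd \<inter> Pm = Pm" using PmPd by blast
    finally show ?thesis using cardPm by simp
  qed
  have old_cost: "cost \<alpha> Pd \<rho> \<le> (1 + \<epsilon>) * real d"
    using S1 OPT_le[OF fc, of \<alpha>] cc ep by (smt (verit) mult_left_mono)
  define \<rho>s where "\<rho>s = (\<lambda>p. if p = s then real d else 0)"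
  have fs: "feasible s P' \<rho>s"
  proof -
    have h1: "\<bar>s - q\<bar> \<le> real d" if q: "q \<in> P'" for q
      using q unfolding P'_def Pd_def by auto
    have sP: "s \<in> P'" using sPd unfolding P'_def by auto
    show ?thesis unfolding feasible_def range_assignment_def has_arborescence_def comm_edge_def
      using h1 sP by (intro conjI exI[of _ "\<lambda>q. s"]) (auto simp: \<rho>s_def intro: exI[of _ 1])
  qed
  have cs: "cost \<alpha> P' \<rho>s = real d powr \<alpha>"
  proof -
    have "cost \<alpha> P' \<rho>s = (\<Sum>p\<in>P'. if p = s then real d powr \<alpha> else 0)"
      unfolding cost_def \<rho>s_def by (intro sum.cong) auto
    also have "\<dots> = real d powr \<alpha>" using finPd sPd unfolding P'_def by (simp add: sum.delta)
    finally show ?thesis .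
  qed
  have new_cost: "cost \<alpha> P' \<rho>' \<le> (1 + \<epsilon>) * real d powr \<alpha>"
    using S2 OPT_le[OF fs, of \<alpha>] cs ep by (smt (verit) mult_left_mono)
  obtain S where SPd: "S \<subseteq> Pd" and finS: "finite S" and S1': "\<forall>p\<in>S. 1 \<le> \<rho> p"
    and Ssum: "real d \<le> (\<Sum>p\<in>S. \<rho> p)"
  proof -
    obtain par where parP: "\<forall>q\<in>Pd - {s}. par q \<in> Pd \<and> comm_edge Pd \<rho> (par q) q"
      and parR: "\<forall>q\<in>Pd. \<exists>n. (par ^^ n) q = s"
      using S1 unfolding feasible_def has_arborescence_def by blast
    have qd: "s + real d \<in> Pd" unfolding Pd_def by auto
    obtain n where n1: "(par ^^ n) (s + real d) = s" and n2: "\<forall>m<n. \<not> (par ^^ m) (s + real d) = s"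
      using parR qd exists_least_iff[of "\<lambda>n. (par ^^ n) (s + real d) = s"] by blast
    have par': "\<forall>q\<in>Pd - {s}. par q \<in> Pd \<and> \<bar>par q - q\<bar> \<le> \<rho> (par q)"
      using parP unfolding comm_edge_def by blast
    have grid: "\<forall>x\<in>Pd. \<forall>y\<in>Pd. x \<noteq> y \<longrightarrow> 1 \<le> \<bar>x - y\<bar>"
      unfolding Pd_def using nat_real_sep by fastforce
    note PL = path_lemma[OF par' grid qd n1] n2
    show ?thesis
      by (rule that[of "(\<lambda>m. (par ^^ Suc m) (s + real d)) ` {..<n}"]) (use PL in auto)
  qed
  have eqs: "(\<Sum>p\<in>S. \<rho> p + \<beta> * (\<rho> p - 2)) = (1 + \<beta>) * sum \<rho> S - 2 * \<beta> * card S"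
    by (simp add: sum.distrib sum_subtractf sum_distrib_left[symmetric] algebra_simps)
  have "(1 + \<beta>) * real d \<le> (1 + \<beta>) * sum \<rho> S" using Ssum \<beta>0 by (intro mult_left_mono) auto
  then have "(1 + \<beta>) * real d - 2 * \<beta> * card S \<le> (\<Sum>p\<in>S. \<rho> p + \<beta> * (\<rho> p - 2))"
    unfolding eqs by linarith
  also have "\<dots> \<le> (\<Sum>p\<in>S. \<rho> p powr \<alpha>)"
    using S1' powr_lower[OF a1] unfolding \<beta>_def by (intro sum_mono) auto
  also have "\<dots> \<le> cost \<alpha> Pd \<rho>" unfolding cost_def using SPd finPd by (intro sum_mono2) auto
  finally have A1: "(\<beta> - \<epsilon>) * real d \<le> 2 * \<beta> * card S" using old_cost by (simp add: algebra_simps)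
  have A2: "real (card S) \<le> real (k \<epsilon>) + 1 + \<epsilon> * real d powr \<alpha>"
  proof -
    define q0 where "q0 = s - real d"
    have q0P: "q0 \<in> P'" unfolding q0_def P'_def by simp
    have q0s: "q0 \<noteq> s" unfolding q0_def using d1 by simp
    obtain par where parP: "\<forall>q\<in>P' - {s}. par q \<in> P' \<and> comm_edge P' \<rho>' (par q) q"
      and parR: "\<forall>q\<in>P'. \<exists>n. (par ^^ n) q = s"
      using S2 unfolding feasible_def has_arborescence_def by blast
    obtain n where n1: "(par ^^ n) q0 = s" and n2: "\<forall>m<n. \<not> (par ^^ m) q0 = s"
      using parR q0P exists_least_iff[of "\<lambda>n. (par ^^ n) q0 = s"] by blast
    define b where "b = par q0"
    have bP: "b \<in> P'" and be: "\<bar>b - q0\<bar> \<le> \<rho>' b"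
      using parP q0P q0s unfolding b_def comm_edge_def by auto
    have bq: "b \<noteq> q0"
    proof
      assume bq0: "b = q0"
      have n0: "n \<noteq> 0" using n1 q0s by (cases n) auto
      then have "(par ^^ n) q0 = (par ^^ (n - 1)) (par q0)"
        by (metis Suc_diff_1 comp_apply funpow_Suc_right not_gr_zero)
      then have "(par ^^ (n - 1)) q0 = s" using n1 bq0 b_def by simp
      then show False using n2 n0 by simp
    qed
    have bPd: "b \<in> Pd" using bP bq unfolding P'_def q0_def by auto
    have "b \<ge> s" using bPd unfolding Pd_def by auto
    then have bd: "real d \<le> \<rho>' b" using be unfolding q0_def by linarith
    define T where "T = S - C - {b}"
    have finC: "finite C" and cardC: "card C \<le> k \<epsilon>" using S2 unfolding C_def by auto
    have finT: "finite T" unfolding T_def using finS by simp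
    have "card S \<le> card (T \<union> insert b C)"
      by (rule card_mono) (use finT finC in \<open>auto simp: T_def\<close>)
    also have "\<dots> \<le> card T + card (insert b C)" by (rule card_Un_le)
    also have "\<dots> \<le> card T + card C + 1" using card_insert_le_m1 finC
      by (simp add: card_insert_if)
    finally have cS: "card S \<le> card T + card C + 1" .
    have finP': "finite P'" unfolding P'_def using finPd by simp
    have rnn: "\<forall>p. 0 \<le> \<rho>' p" using S2 unfolding feasible_def range_assignment_def by blast
    have "(\<Sum>p\<in>insert b T. \<rho>' p powr \<alpha>) \<le> cost \<alpha> P' \<rho>'"
      unfolding cost_def using finP' bP SPd unfolding T_def P'_def by (intro sum_mono2) auto
    moreover have "(\<Sum>p\<in>insert b T. \<rho>' p powr \<alpha>) = \<rho>' b powr \<alpha> + (\<Sum>p\<in>T. \<rho>' p powr \<alpha>)"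
      using finT by (subst sum.insert) (auto simp: T_def)
    moreover have "real d powr \<alpha> \<le> \<rho>' b powr \<alpha>" using bd a1 by (intro powr_mono2) auto
    moreover have "(\<Sum>p\<in>T. (1::real)) \<le> (\<Sum>p\<in>T. \<rho>' p powr \<alpha>)"
    proof (rule sum_mono)
      fix p assume p: "p \<in> T"
      then have "\<rho> p = \<rho>' p" "1 \<le> \<rho> p" using S1' unfolding T_def C_def modified_def by auto
      then show "1 \<le> \<rho>' p powr \<alpha>" using a1 by (intro ge_one_powr_ge_zero) auto
    qed
    ultimately have "real d powr \<alpha> + card T \<le> (1 + \<epsilon>) * real d powr \<alpha>"
      using new_cost by simp
    then have "card T \<le> \<epsilon> * real d powr \<alpha>" by (simp add: algebra_simps)
    then show ?thesis using cS cardC by linarith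
  qed
  have "real d * (\<beta> - \<epsilon>) / (2 * \<beta>) \<le> card S"
    using A1 \<beta>0 by (simp add: field_simps)
  then show ?thesis using A2 unfolding \<beta>_def by linarith
qed

lemma pointwise:
  fixes \<alpha> s \<epsilon> :: real
    and alg :: "real \<Rightarrow> real set \<Rightarrow> (real \<Rightarrow> real) \<Rightarrow> upd \<Rightarrow> (real \<Rightarrow> real)"
    and k :: "real \<Rightarrow> nat"
  assumes a1: "\<alpha> > 1" and sas: "SAS \<alpha> s alg k" and ep: "\<epsilon> > 0"
    and epb: "\<epsilon> \<le> (2 powr (\<alpha> - 1) - 1) / 2"
    and tM: "8 powr (- 1 / (\<alpha> - 1)) * (1 / \<epsilon>) powr (1 / (\<alpha> - 1)) \<ge> 20"
  shows "8 powr (- 1 / (\<alpha> - 1)) / 16 * (1 / \<epsilon>) powr (1 / (\<alpha> - 1)) \<le> real (k \<epsilon>)"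
proof -
  define \<beta> where "\<beta> = 2 powr (\<alpha> - 1) - 1"
  have \<beta>0: "\<beta> > 0" unfolding \<beta>_def using a1 by (simp add: powr_gt_zero)
  define c where "c = 8 powr (- 1 / (\<alpha> - 1))"
  define t where "t = (1 / \<epsilon>) powr (1 / (\<alpha> - 1))"
  have c0: "c > 0" unfolding c_def by simp
  have t0: "t > 0" unfolding t_def using ep by simp
  define d where "d = nat \<lfloor>c * t\<rfloor>"
  have ct: "c * t \<ge> 20" using tM unfolding c_def t_def .
  have dlo: "c * t - 1 \<le> real d" and dhi: "real d \<le> c * t" unfolding d_def using ct by linarith+
  have d1: "d \<ge> 1" using dlo ct by linarith
  note C = core[OF a1 sas ep d1]
  have q: "1/4 \<le> (\<beta> - \<epsilon>) / (2 * \<beta>)" using \<beta>0 epb unfolding \<beta>_def[symmetric] by (simp add: field_simps)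
  have "real d * (1/4) \<le> real d * ((\<beta> - \<epsilon>) / (2 * \<beta>))" using q by (intro mult_left_mono) auto
  moreover have "real d * ((\<beta> - \<epsilon>) / (2 * \<beta>)) = real d * (\<beta> - \<epsilon>) / (2 * \<beta>)" by simp
  ultimately have C1: "real d / 4 - 1 - \<epsilon> * real d powr \<alpha> \<le> real (k \<epsilon>)" using C unfolding \<beta>_def[symmetric] by linarith
  have cp0: "c powr (\<alpha> - 1) = 8 powr ((- 1 / (\<alpha> - 1)) * (\<alpha> - 1))" unfolding c_def by (simp only: powr_powr)
  have "(- 1 / (\<alpha> - 1)) * (\<alpha> - 1) = -1" using a1 by simp
  then have cp: "c powr (\<alpha> - 1) = 1 / 8" using cp0 by (simp add: powr_minus)
  have tp: "t powr (\<alpha> - 1) = 1 / \<epsilon>" unfolding t_def using a1 ep by (simp add: powr_powr)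
  have "(c * t) powr \<alpha> = (c * t) * (c * t) powr (\<alpha> - 1)" using c0 t0 by (simp add: powr_mult_base)
  also have "\<dots> = (c * t) * (1 / 8) * (1 / \<epsilon>)" using c0 t0 by (simp only: powr_mult cp tp)
  finally have ctp: "\<epsilon> * (c * t) powr \<alpha> = c * t / 8" using ep by simp
  have "real d powr \<alpha> \<le> (c * t) powr \<alpha>" using dhi a1 by (intro powr_mono2) auto
  then have "\<epsilon> * real d powr \<alpha> \<le> c * t / 8" using ep ctp by (metis mult_left_mono less_imp_le)
  then have "c * t / 8 - 5/4 \<le> real (k \<epsilon>)" using C1 dlo by linarith
  then show ?thesis using ct unfolding c_def[symmetric] t_def[symmetric] by linarith
qed

theorem theorem4:
  fixes \<alpha> s :: real
    and alg :: "real \<Rightarrow> real set \<Rightarrow> (real \<Rightarrow> real) \<Rightarrow> upd \<Rightarrow> (real \<Rightarrow> real)"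
    and k :: "real \<Rightarrow> nat"
  assumes "\<alpha> > 1"
    and "SAS \<alpha> s alg k"
  shows "(\<lambda>\<epsilon>. real (k \<epsilon>)) \<in> \<Omega>[at_right 0](\<lambda>\<epsilon>. (1 / \<epsilon>) powr (1 / (\<alpha> - 1)))"
proof -
  define c where "c = 8 powr (- 1 / (\<alpha> - 1))"
  have c0: "c > 0" unfolding c_def by simp
  define M where "M = 20 / c"
  have M0: "M > 0" unfolding M_def using c0 by simp
  define \<beta> where "\<beta> = 2 powr (\<alpha> - 1) - 1"
  have \<beta>0: "\<beta> > 0" unfolding \<beta>_def using assms(1) by (simp add: powr_gt_zero)
  define e1 where "e1 = min (\<beta> / 2) (1 / (M powr (\<alpha> - 1)))"
  have e10: "e1 > 0" unfolding e1_def using \<beta>0 M0 by simp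
  have ev: "eventually (\<lambda>\<epsilon>. c / 16 * norm ((1 / \<epsilon>) powr (1 / (\<alpha> - 1))) \<le> norm (real (k \<epsilon>))) (at_right (0::real))"
    unfolding eventually_at_right_field
  proof (intro exI[of _ e1] conjI allI impI)
    show "0 < e1" by (rule e10)
    fix \<epsilon> :: real assume ep: "0 < \<epsilon>" "\<epsilon> < e1"
    have epb: "\<epsilon> \<le> \<beta> / 2" using ep unfolding e1_def by simp
    have "\<epsilon> < 1 / (M powr (\<alpha> - 1))" using ep unfolding e1_def by simp
    then have "M powr (\<alpha> - 1) < 1 / \<epsilon>" using ep M0 by (simp add: field_simps)
    then have "(M powr (\<alpha> - 1)) powr (1 / (\<alpha> - 1)) \<le> (1 / \<epsilon>) powr (1 / (\<alpha> - 1))"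
      using assms(1) by (intro powr_mono2) auto
    moreover have "(M powr (\<alpha> - 1)) powr (1 / (\<alpha> - 1)) = M" using assms(1) M0 by (simp add: powr_powr)
    ultimately have "M \<le> (1 / \<epsilon>) powr (1 / (\<alpha> - 1))" by simp
    then have "c * M \<le> c * (1 / \<epsilon>) powr (1 / (\<alpha> - 1))" using c0 by (intro mult_left_mono) auto
    moreover have "c * M = 20" unfolding M_def using c0 by simp
    ultimately have tM: "20 \<le> c * (1 / \<epsilon>) powr (1 / (\<alpha> - 1))" by simp
    have "c / 16 * (1 / \<epsilon>) powr (1 / (\<alpha> - 1)) \<le> real (k \<epsilon>)"
      using pointwise[OF assms(1,2) ep(1) epb[unfolded \<beta>_def]] tM unfolding c_def by simp
    then show "c / 16 * norm ((1 / \<epsilon>) powr (1 / (\<alpha> - 1))) \<le> norm (real (k \<epsilon>))" by simp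
  qed
  show ?thesis unfolding bigomega_def using c0 ev
    by (intro CollectI exI[of _ "c / 16"]) auto
qed

end
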